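(* Let $\mathcal{P}$ be a finite nonempty set of stochastic trees and $L$ an LPTS with $k$ states such that $P \preceq L$ for every $P\in\mathcal{P}$. Then there is a partition $\Pi$ of $S_\mathcal{P}$, in which the start states of all trees in $\mathcal{P}$ lie in the same class, having at most $2^k$ classes, such that $\mathcal{P}/\Pi \preceq L$.
   Context: An LPTS is a tuple $\langle S,s^0,\alpha,\tau\rangle$ with finite state set $S$, start state $s^0$, finite action set $\alpha$, finite $\tau\subseteq S\times\alpha\times\mathrm{Dist}(S)$, where $\mathrm{Dist}(S)$ is the set of discrete probability distributions over $S$ (rational probabilities); write $s\xrightarrow{a}\mu$. A stochastic tree is an LPTS whose start state is in the support of no transition's distribution and every other state is in the support of exactly one transition's distribution. Strong simulation: for $\mu_1\in\mathrm{Dist}(S_1)$, $\mu_2\in\mathrm{Dist}(S_2)$, $R\subseteq S_1\times S_2$, $\mu_1\sqsubseteq_R\mu_2$ iff there is $w:S_1\times S_2\to\mathbb{Q}\cap[0,1]$ with $\sum_{s_2}w(s_1,s_2)=\mu_1(s_1)$, $\sum_{s_1}w(s_1,s_2)=\mu_2(s_2)$ and $w(s_1,s_2)>0\Rightarrow s_1Rs_2$; $R$ is a strong simulation iff $s_1Rs_2$ and $s_1\xrightarrow{a}\mu_1$ imply some $s_2\xrightarrow{a}\mu_2$ with $\mu_1\sqsubseteq_R\mu_2$; $L_1\preceq L_2$ iff a strong simulation relates the start states. $S_\mathcal{P}$ is the (disjoint) union of the state sets of the trees in $\mathcal{P}$. For a partition $\Pi$ of $S_\mathcal{P}$ with classes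 $E_\Pi$ and class $[s]$ of $s$ (start states all in one class), the quotient $\mathcal{P}/\Pi$ is the LPTS with states $E_\Pi$, start state the common class of the start states, actions $\bigcup_{P\in\mathcal{P}}\alpha_P$, and a transition $e\xrightarrow{a}\mu$ iff some tree $P\in\mathcal{P}$ has a transition $s\xrightarrow{a}\mu_p$ with $[s]=e$ and $\mu(e')=\sum_{s'\in e'}\mu_p(s')$ for all $e'\in E_\Pi$. *)

theory Defs
  imports Complex_Main "HOL-Library.Disjoint_Sets"
begin

record ('s, 'a) lpts =
  states :: "'s set"
  start  :: 's
  acts   :: "'a set"
  trans  :: "('s \<times> 'a \<times> ('s \<Rightarrow> rat)) set"

definition is_dist :: "'s set \<Rightarrow> ('s \<Rightarrow> rat) \<Rightarrow> bool" where
  "is_dist S \<mu> \<longleftrightarrow> (\<forall>s. 0 \<le> \<mu> s) \<and> {s. \<mu> s \<noteq> 0} \<subseteq> S \<and> sum \<mu> S = 1"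

definition wf_lpts :: "('s, 'a) lpts \<Rightarrow> bool" where
  "wf_lpts L \<longleftrightarrow> finite (states L) \<and> start L \<in> states L \<and> finite (acts L)
     \<and> finite (trans L)
     \<and> (\<forall>(s, a, \<mu>) \<in> trans L. s \<in> states L \<and> a \<in> acts L \<and> is_dist (states L) \<mu>)"

definition stochastic_tree :: "('s, 'a) lpts \<Rightarrow> bool" where
  "stochastic_tree L \<longleftrightarrow> wf_lpts L
     \<and> (\<forall>(s, a, \<mu>) \<in> trans L. \<mu> (start L) = 0)
     \<and> (\<forall>s \<in> states L. s \<noteq> start L \<longrightarrow> (\<exists>!t. t \<in> trans L \<and> snd (snd t) s > 0))"

definition lift_rel ::
  "'s1 set \<Rightarrow> 's2 set \<Rightarrow> ('s1 \<times> 's2) set \<Rightarrow> ('s1 \<Rightarrow> rat) \<Rightarrow> ('s2 \<Rightarrow> rat) \<Rightarrow> bool" where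
  "lift_rel S1 S2 R \<mu>1 \<mu>2 \<longleftrightarrow> (\<exists>w :: 's1 \<Rightarrow> 's2 \<Rightarrow> rat.
      (\<forall>s1\<in>S1. \<forall>s2\<in>S2. 0 \<le> w s1 s2 \<and> w s1 s2 \<le> 1)
    \<and> (\<forall>s1\<in>S1. (\<Sum>s2\<in>S2. w s1 s2) = \<mu>1 s1)
    \<and> (\<forall>s2\<in>S2. (\<Sum>s1\<in>S1. w s1 s2) = \<mu>2 s2)
    \<and> (\<forall>s1\<in>S1. \<forall>s2\<in>S2. w s1 s2 > 0 \<longrightarrow> (s1, s2) \<in> R))"

definition strong_sim :: "('s1, 'a) lpts \<Rightarrow> ('s2, 'a) lpts \<Rightarrow> ('s1 \<times> 's2) set \<Rightarrow> bool" where
  "strong_sim L1 L2 R \<longleftrightarrow> R \<subseteq> states L1 \<times> states L2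
     \<and> (\<forall>(s1, s2) \<in> R. \<forall>a \<mu>1. (s1, a, \<mu>1) \<in> trans L1 \<longrightarrow>
          (\<exists>\<mu>2. (s2, a, \<mu>2) \<in> trans L2 \<and> lift_rel (states L1) (states L2) R \<mu>1 \<mu>2))"

definition sim_le :: "('s1, 'a) lpts \<Rightarrow> ('s2, 'a) lpts \<Rightarrow> bool" (infix "\<preceq>\<^sub>s" 50) where
  "L1 \<preceq>\<^sub>s L2 \<longleftrightarrow> (\<exists>R. strong_sim L1 L2 R \<and> (start L1, start L2) \<in> R)"

definition union_states :: "('s, 'a) lpts set \<Rightarrow> (('s, 'a) lpts \<times> 's) set" where
  "union_states \<P> = {(P, s). P \<in> \<P> \<and> s \<in> states P}"

definition cls :: "'x set set \<Rightarrow> 'x \<Rightarrow> 'x set" where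
  "cls Q x = (THE e. e \<in> Q \<and> x \<in> e)"

definition quotient ::
  "('s, 'a) lpts set \<Rightarrow> (('s, 'a) lpts \<times> 's) set set \<Rightarrow> ((('s, 'a) lpts \<times> 's) set, 'a) lpts" where
  "quotient \<P> Q = \<lparr>
     states = Q,
     start = cls Q (let P = (SOME P. P \<in> \<P>) in (P, start P)),
     acts = (\<Union>P\<in>\<P>. acts P),
     trans = {(e, a, \<mu>). \<exists>P\<in>\<P>. \<exists>s \<mu>p. (s, a, \<mu>p) \<in> trans P \<and> cls Q (P, s) = e
                \<and> \<mu> = (\<lambda>e'. if e' \<in> Q then (\<Sum>s'\<in>{s'\<in>states P. (P, s') \<in> e'}. \<mu>p s') else 0)} \<rparr>"

end

theory Submission
  imports Defs
begin

definition RR :: "('t, 'a) lpts \<Rightarrow> ('s, 'a) lpts \<Rightarrow> ('s \<times> 't) set" where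
  "RR L P = (SOME R. strong_sim P L R \<and> (start P, start L) \<in> R) - {(start P, t) | t. t \<noteq> start L}"

lemma RR_sim:
  assumes tree: "stochastic_tree P" and wfL: "wf_lpts L" and le: "P \<preceq>\<^sub>s L"
  shows "strong_sim P L (RR L P)" "(start P, start L) \<in> RR L P"
proof -
  define R where "R = (SOME R. strong_sim P L R \<and> (start P, start L) \<in> R)"
  have R: "strong_sim P L R" "(start P, start L) \<in> R"
    using someI_ex[OF le[unfolded sim_le_def]] unfolding R_def by auto
  have RR: "RR L P = R - {(start P, t) | t. t \<noteq> start L}" unfolding RR_def R_def by simp
  show "(start P, start L) \<in> RR L P" using R(2) RR by auto
  have finL: "finite (states L)" using wfL wf_lpts_def by auto
  have sub: "RR L P \<subseteq> states P \<times> states L" using R(1) RR unfolding strong_sim_def by auto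
  have "\<forall>x\<in>RR L P. \<forall>a \<mu>1. (fst x, a, \<mu>1) \<in> trans P \<longrightarrow> (\<exists>\<mu>2. (snd x, a, \<mu>2) \<in> trans L \<and> lift_rel (states P) (states L) (RR L P) \<mu>1 \<mu>2)"
  proof (intro ballI allI impI)
    fix x a \<mu>1 assume x: "x \<in> RR L P" and tr: "(fst x, a, \<mu>1) \<in> trans P"
    obtain s1 s2 where xs: "x = (s1, s2)" by fastforce
    have "(s1, s2) \<in> R" using x xs RR by auto
    then obtain \<mu>2 where m2: "(s2, a, \<mu>2) \<in> trans L" and lr: "lift_rel (states P) (states L) R \<mu>1 \<mu>2"
      using R(1) tr xs unfolding strong_sim_def by fastforce
    then obtain w where w1: "\<forall>s1\<in>states P. \<forall>s2\<in>states L. 0 \<le> w s1 s2 \<and> w s1 s2 \<le> 1"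
      and w2: "\<forall>s1\<in>states P. (\<Sum>s2\<in>states L. w s1 s2) = \<mu>1 s1"
      and w3: "\<forall>s2\<in>states L. (\<Sum>s1\<in>states P. w s1 s2) = \<mu>2 s2"
      and w4: "\<forall>s1\<in>states P. \<forall>s2\<in>states L. w s1 s2 > 0 \<longrightarrow> (s1, s2) \<in> R"
      unfolding lift_rel_def by blast
    have mu0: "\<mu>1 (start P) = 0" using tree tr xs unfolding stochastic_tree_def by auto
    have "lift_rel (states P) (states L) (RR L P) \<mu>1 \<mu>2"
    proof -
      have "\<forall>u\<in>states P. \<forall>v\<in>states L. 0 < w u v \<longrightarrow> (u, v) \<in> RR L P"
      proof (intro ballI impI)
        fix u v assume u: "u \<in> states P" and v: "v \<in> states L" and pos: "0 < w u v"
        have "u \<noteq> start P"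
        proof
          assume us: "u = start P"
          have "(\<Sum>s2\<in>states L. w u s2) = 0" using w2 u us mu0 by auto
          hence "w u v = 0" using sum_nonneg_eq_0_iff[OF finL] w1 u v by auto
          thus False using pos by simp
        qed
        thus "(u, v) \<in> RR L P" using w4 u v pos RR by auto
      qed
      then show ?thesis unfolding lift_rel_def using w1 w2 w3 by blast
    qed
    thus "\<exists>\<mu>2. (snd x, a, \<mu>2) \<in> trans L \<and> lift_rel (states P) (states L) (RR L P) \<mu>1 \<mu>2"
      using m2 xs by auto
  qed
  then show "strong_sim P L (RR L P)" using sub unfolding strong_sim_def by fastforce
qed

theorem lemma7:
  fixes \<P> :: "('s, 'a) lpts set" and L :: "('t, 'a) lpts"
  assumes "finite \<P>" and "\<P> \<noteq> {}"
    and "\<forall>P\<in>\<P>. stochastic_tree P"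
    and "wf_lpts L"
    and "\<forall>P\<in>\<P>. P \<preceq>\<^sub>s L"
  shows "\<exists>Q. partition_on (union_states \<P>) Q
           \<and> (\<exists>e\<in>Q. \<forall>P\<in>\<P>. (P, start P) \<in> e)
           \<and> card Q \<le> 2 ^ card (states L)
           \<and> quotient \<P> Q \<preceq>\<^sub>s L"
proof -
  note finP = assms(1) and neP = assms(2) and tree = assms(3) and wfL = assms(4) and le = assms(5)
  define U where "U = union_states \<P>"
  define key where "key = (\<lambda>x::(('s,'a) lpts \<times> 's). {t. (snd x, t) \<in> RR L (fst x)})"
  define Q where "Q = (\<lambda>K. {y\<in>U. key y = K}) ` (key ` U)"
  have sim: "\<And>P. P\<in>\<P> \<Longrightarrow> strong_sim P L (RR L P)"
    and st: "\<And>P. P\<in>\<P> \<Longrightarrow> (start P, start L) \<in> RR L P"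
    using RR_sim tree wfL le by blast+
  have wfP: "\<And>P. P\<in>\<P> \<Longrightarrow> wf_lpts P" using tree stochastic_tree_def by blast
  have finL: "finite (states L)" using wfL wf_lpts_def by blast
  have U_eq: "U = (\<Union>P\<in>\<P>. (\<lambda>s. (P, s)) ` states P)" unfolding U_def union_states_def by auto
  have finU: "finite U" unfolding U_eq using finP wfP wf_lpts_def by auto
  have keyL: "\<And>x. x \<in> U \<Longrightarrow> key x \<subseteq> states L"
  proof -
    fix x assume "x \<in> U"
    then obtain P s where x: "x = (P, s)" "P \<in> \<P>" unfolding U_def union_states_def by auto
    show "key x \<subseteq> states L" using sim[OF x(2)] x unfolding key_def strong_sim_def by auto
  qed
  have finQ: "finite Q" unfolding Q_def using finU by simp
  have clsQ: "\<And>x. x \<in> U \<Longrightarrow> cls Q x = {y\<in>U. key y = key x}"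
  proof -
    fix x assume x: "x \<in> U"
    show "cls Q x = {y\<in>U. key y = key x}"
      unfolding cls_def
    proof (rule the_equality)
      show "{y\<in>U. key y = key x} \<in> Q \<and> x \<in> {y\<in>U. key y = key x}" using x unfolding Q_def by auto
    next
      fix e assume "e \<in> Q \<and> x \<in> e"
      then show "e = {y\<in>U. key y = key x}" unfolding Q_def by auto
    qed
  qed
  have clsI: "\<And>e y. e \<in> Q \<Longrightarrow> y \<in> e \<Longrightarrow> cls Q y = e"
  proof -
    fix e y assume e: "e \<in> Q" and y: "y \<in> e"
    then obtain K where eK: "e = {y\<in>U. key y = K}" unfolding Q_def by auto
    then have "y \<in> U" "key y = K" using y by auto
    then show "cls Q y = e" using clsQ eK by auto
  qed
  have cls_in: "\<And>x. x \<in> U \<Longrightarrow> cls Q x \<in> Q \<and> x \<in> cls Q x" using clsQ unfolding Q_def by auto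
  have part: "partition_on U Q"
    unfolding partition_on_def disjoint_def Q_def by auto
  have keystart: "\<And>P. P \<in> \<P> \<Longrightarrow> key (P, start P) = {start L}"
    using st unfolding key_def RR_def by auto
  have card: "card Q \<le> 2 ^ card (states L)"
  proof -
    have "card Q \<le> card (key ` U)" unfolding Q_def by (rule card_image_le) (use finU in simp)
    also have "\<dots> \<le> card (Pow (states L))" by (rule card_mono) (use finL keyL in auto)
    also have "\<dots> = 2 ^ card (states L)" using finL by (simp add: card_Pow)
    finally show ?thesis .
  qed
  define P0 where "P0 = (SOME P. P \<in> \<P>)"
  have P0: "P0 \<in> \<P>" unfolding P0_def using neP by (simp add: some_in_eq)
  have startU: "\<And>P. P \<in> \<P> \<Longrightarrow> (P, start P) \<in> U" using wfP unfolding U_def union_states_def wf_lpts_def by auto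
  have startcls: "\<forall>P\<in>\<P>. (P, start P) \<in> cls Q (P0, start P0)"
    using clsQ[OF startU[OF P0]] keystart P0 startU by auto
  define R' where "R' = {(cls Q x, t) | x t. x \<in> U \<and> t \<in> key x}"
  have qstart: "start (quotient \<P> Q) = cls Q (P0, start P0)"
    unfolding quotient_def P0_def by (simp add: Let_def)
  have qstates: "states (quotient \<P> Q) = Q" unfolding quotient_def by simp
  have step: "\<And>e t a \<mu>. (e, t) \<in> R' \<Longrightarrow> (e, a, \<mu>) \<in> trans (quotient \<P> Q) \<Longrightarrow>
      \<exists>\<mu>2. (t, a, \<mu>2) \<in> trans L \<and> lift_rel Q (states L) R' \<mu> \<mu>2"
  proof -
    fix e t a \<mu> assume eR: "(e, t) \<in> R'" and tr: "(e, a, \<mu>) \<in> trans (quotient \<P> Q)"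
    obtain x where x: "x \<in> U" "t \<in> key x" "e = cls Q x" using eR unfolding R'_def by auto
    obtain P s \<mu>p where P: "P \<in> \<P>" and trP: "(s, a, \<mu>p) \<in> trans P" and es: "cls Q (P, s) = e"
      and mu: "\<mu> = (\<lambda>e'. if e' \<in> Q then (\<Sum>s'\<in>{s'\<in>states P. (P, s') \<in> e'}. \<mu>p s') else 0)"
      using tr unfolding quotient_def by auto
    have wP: "wf_lpts P" using wfP[OF P] .
    have sP: "s \<in> states P" using wP trP unfolding wf_lpts_def by auto
    have dist: "is_dist (states P) \<mu>p" using wP trP unfolding wf_lpts_def by auto
    have finSP: "finite (states P)" using wP unfolding wf_lpts_def by auto
    have sU: "(P, s) \<in> U" using P sP unfolding U_def union_states_def by auto
    have "key (P, s) = key x" using cls_in[OF sU] es x clsQ by auto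
    hence "(s, t) \<in> RR L P" using x unfolding key_def by auto
    then obtain \<mu>2 where m2: "(t, a, \<mu>2) \<in> trans L"
        and lr: "lift_rel (states P) (states L) (RR L P) \<mu>p \<mu>2"
      using sim[OF P] trP unfolding strong_sim_def by fastforce
    then obtain w where w1: "\<forall>s1\<in>states P. \<forall>s2\<in>states L. 0 \<le> w s1 s2 \<and> w s1 s2 \<le> 1"
      and w2: "\<forall>s1\<in>states P. (\<Sum>s2\<in>states L. w s1 s2) = \<mu>p s1"
      and w3: "\<forall>s2\<in>states L. (\<Sum>s1\<in>states P. w s1 s2) = \<mu>2 s2"
      and w4: "\<forall>s1\<in>states P. \<forall>s2\<in>states L. w s1 s2 > 0 \<longrightarrow> (s1, s2) \<in> RR L P"
      unfolding lift_rel_def by blast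
    define A where "A = (\<lambda>e'. {s'\<in>states P. (P, s') \<in> e'})"
    define w' where "w' = (\<lambda>e' t'. \<Sum>s'\<in>A e'. w s' t')"
    have Asub: "\<And>e'. A e' \<subseteq> states P" unfolding A_def by auto
    have finA: "\<And>e'. finite (A e')" using finSP Asub finite_subset by blast
    have mupos: "\<And>s'. 0 \<le> \<mu>p s'" using dist unfolding is_dist_def by auto
    have musum: "sum \<mu>p (states P) = 1" using dist unfolding is_dist_def by auto
    have c1: "\<forall>e'\<in>Q. \<forall>t'\<in>states L. 0 \<le> w' e' t' \<and> w' e' t' \<le> 1"
    proof (intro ballI conjI)
      fix e' t' assume e': "e' \<in> Q" and t': "t' \<in> states L"
      show "0 \<le> w' e' t'" unfolding w'_def using w1 t' Asub by (intro sum_nonneg) auto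
      have "w' e' t' \<le> (\<Sum>s'\<in>A e'. \<mu>p s')" unfolding w'_def
      proof (rule sum_mono)
        fix s' assume s': "s' \<in> A e'"
        have "w s' t' \<le> (\<Sum>t''\<in>states L. w s' t'')"
          by (rule member_le_sum) (use t' w1 s' Asub finL in auto)
        then show "w s' t' \<le> \<mu>p s'" using w2 s' Asub[of e'] by (metis subsetD)
      qed
      also have "\<dots> \<le> sum \<mu>p (states P)" by (rule sum_mono2) (use finSP Asub mupos in auto)
      finally show "w' e' t' \<le> 1" using musum by simp
    qed
    have c2: "\<forall>e'\<in>Q. (\<Sum>t'\<in>states L. w' e' t') = \<mu> e'"
    proof
      fix e' assume e': "e' \<in> Q"
      have "(\<Sum>t'\<in>states L. w' e' t') = (\<Sum>s'\<in>A e'. \<Sum>t'\<in>states L. w s' t')"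
        unfolding w'_def by (rule sum.swap)
      also have "\<dots> = (\<Sum>s'\<in>A e'. \<mu>p s')" using w2 Asub by (intro sum.cong) auto
      finally show "(\<Sum>t'\<in>states L. w' e' t') = \<mu> e'" using e' unfolding mu A_def by simp
    qed
    have Aeq: "\<And>e'. e' \<in> Q \<Longrightarrow> A e' = {s'. s' \<in> states P \<and> cls Q (P, s') = e'}"
    proof -
      fix e' assume e': "e' \<in> Q"
      have "\<And>s'. s' \<in> states P \<Longrightarrow> (P, s') \<in> U" using P unfolding U_def union_states_def by auto
      then show "A e' = {s'. s' \<in> states P \<and> cls Q (P, s') = e'}"
        unfolding A_def using clsI[OF e'] cls_in by blast
    qed
    have c3: "\<forall>t'\<in>states L. (\<Sum>e'\<in>Q. w' e' t') = \<mu>2 t'"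
    proof
      fix t' assume t': "t' \<in> states L"
      have "(\<Sum>e'\<in>Q. w' e' t') = (\<Sum>e'\<in>Q. \<Sum>s'\<in>{s'. s' \<in> states P \<and> cls Q (P, s') = e'}. w s' t')"
        unfolding w'_def using Aeq by (intro sum.cong) auto
      also have "\<dots> = (\<Sum>s'\<in>states P. w s' t')"
        by (rule sum.group) (use finSP finQ cls_in P in \<open>auto simp: U_def union_states_def\<close>)
      finally show "(\<Sum>e'\<in>Q. w' e' t') = \<mu>2 t'" using w3 t' by simp
    qed
    have c4: "\<forall>e'\<in>Q. \<forall>t'\<in>states L. 0 < w' e' t' \<longrightarrow> (e', t') \<in> R'"
    proof (intro ballI impI)
      fix e' t' assume e': "e' \<in> Q" and t': "t' \<in> states L" and pos: "0 < w' e' t'"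
      have "\<exists>s'\<in>A e'. 0 < w s' t'"
      proof (rule ccontr)
        assume "\<not> (\<exists>s'\<in>A e'. 0 < w s' t')"
        then have "w' e' t' \<le> 0" unfolding w'_def by (intro sum_nonpos) auto
        then show False using pos by simp
      qed
      then obtain s' where s': "s' \<in> A e'" "0 < w s' t'" by blast
      have sP': "s' \<in> states P" "(P, s') \<in> e'" using s' unfolding A_def by auto
      have "(s', t') \<in> RR L P" using w4 sP' t' s' by auto
      then have "t' \<in> key (P, s')" unfolding key_def by simp
      moreover have "(P, s') \<in> U" using P sP' unfolding U_def union_states_def by auto
      moreover have "cls Q (P, s') = e'" using clsI[OF e' sP'(2)] .
      ultimately show "(e', t') \<in> R'" unfolding R'_def by blast
    qed
    have "lift_rel Q (states L) R' \<mu> \<mu>2" unfolding lift_rel_def using c1 c2 c3 c4 by blast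
    then show "\<exists>\<mu>2. (t, a, \<mu>2) \<in> trans L \<and> lift_rel Q (states L) R' \<mu> \<mu>2" using m2 by blast
  qed
  have Rsub: "R' \<subseteq> Q \<times> states L" using cls_in keyL unfolding R'_def by blast
  have qsim: "strong_sim (quotient \<P> Q) L R'"
    unfolding strong_sim_def qstates using Rsub step by blast
  have "(start (quotient \<P> Q), start L) \<in> R'"
    unfolding qstart R'_def using startU[OF P0] keystart[OF P0] by auto
  then have "quotient \<P> Q \<preceq>\<^sub>s L" using qsim unfolding sim_le_def by blast
  then show ?thesis using part card startcls cls_in[OF startU[OF P0]] unfolding U_def by blast
qed

end
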